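(* Let $I$ be a conditional indicator w.r.t. $\mathcal{H}$ with domain $\mathbb{D}_I=\mathbb{L}^1(\mathbb{R},\mathcal{F})$ such that: (1) $I^*=I$; (2) $I$ is sub-additive (respectively super-additive); (3) $E(|I(X)|)\le E(|X|)$ for all $X\in\mathbb{L}^1(\mathbb{R},\mathcal{F})$. Then $I(X)=E(X\mid\mathcal{H})$ for all $X\in\mathbb{L}^1(\mathbb{R},\mathcal{F})$.
   Context: Let $(\Omega,\mathcal{F},\mathbb{P})$ be a probability space with $\mathcal{F}$ complete, and $\mathcal{H}\subseteq\mathcal{F}$ a complete sub-$\sigma$-algebra. $\overline{\mathbb{R}}=\mathbb{R}\cup\{\pm\infty\}$ with conventions $r\pm\infty=\pm\infty$, $\infty-\infty=0$, $\infty+\infty=\infty$, $0\times(\pm\infty)=0$; $\mathbb{L}^0(G,\mathcal{G})$ is the set of $\mathcal{G}$-measurable random variables a.s. valued in $G$, $\mathbb{L}^1(\mathbb{R},\mathcal{F})$ the integrable real ones. $\operatorname{ess\,sup}_{\mathcal{H}}(X)$ is the smallest $\mathcal{H}$-measurable random variable dominating $X$ a.s., $\operatorname{ess\,inf}_{\mathcal{H}}(X)=-\operatorname{ess\,sup}_{\mathcal{H}}(-X)$. A conditional indicator w.r.t. $\mathcal{H}$ is a map $I:\mathbb{D}_I\to\mathbb{L}^0(\overline{\mathbb{R}},\mathcal{H})$, $0\in\mathbb{D}_I\subseteq\mathbb{L}^0(\overline{\mathbb{R}},\mathcal{F})$, with $I(X)\in[\operatorname{ess\,inf}_{\mathcal{H}}(X),\operatorname{ess\,sup}_{\mathcal{H}}(X)]$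 a.s. and $\mathbb{D}_I+\mathbb{L}^0(\overline{\mathbb{R}},\mathcal{H})\subseteq\mathbb{D}_I$. The dual is $I^*(X)=-I(-X)$ on $-\mathbb{D}_I$. Sub-additive: $I(X+Y)\le I(X)+I(Y)$; super-additive: $I(X+Y)\ge I(X)+I(Y)$. *)

theory Defs
  imports "HOL-Probability.Probability"
begin

definition complete_meas :: "'a measure \<Rightarrow> bool" where
  "complete_meas M \<longleftrightarrow> (\<forall>A B. B \<in> null_sets M \<and> A \<subseteq> B \<longrightarrow> A \<in> sets M)"

definition complete_subalg :: "'a measure \<Rightarrow> 'a measure \<Rightarrow> bool" where
  "complete_subalg M H \<longleftrightarrow> subalgebra M H \<and> null_sets M \<subseteq> sets H"

definition is_cond_ess_sup :: "'a measure \<Rightarrow> 'a measure \<Rightarrow> ('a \<Rightarrow> ereal) \<Rightarrow> ('a \<Rightarrow> ereal) \<Rightarrow> bool" where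
  "is_cond_ess_sup M H X Z \<longleftrightarrow>
     Z \<in> borel_measurable H \<and> (AE x in M. X x \<le> Z x) \<and>
     (\<forall>W \<in> borel_measurable H. (AE x in M. X x \<le> W x) \<longrightarrow> (AE x in M. Z x \<le> W x))"

definition cond_ess_sup :: "'a measure \<Rightarrow> 'a measure \<Rightarrow> ('a \<Rightarrow> ereal) \<Rightarrow> ('a \<Rightarrow> ereal)" where
  "cond_ess_sup M H X = (SOME Z. is_cond_ess_sup M H X Z)"

definition cond_ess_inf :: "'a measure \<Rightarrow> 'a measure \<Rightarrow> ('a \<Rightarrow> ereal) \<Rightarrow> ('a \<Rightarrow> ereal)" where
  "cond_ess_inf M H X = (\<lambda>x. - cond_ess_sup M H (\<lambda>y. - X y) x)"

definition cond_indicator_L1 :: "'a measure \<Rightarrow> 'a measure \<Rightarrow> (('a \<Rightarrow> real) \<Rightarrow> 'a \<Rightarrow> ereal) \<Rightarrow> bool" where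
  "cond_indicator_L1 M H I \<longleftrightarrow>
     (\<forall>X. integrable M X \<longrightarrow>
        I X \<in> borel_measurable H \<and>
        (AE x in M. cond_ess_inf M H (\<lambda>y. ereal (X y)) x \<le> I X x \<and>
                    I X x \<le> cond_ess_sup M H (\<lambda>y. ereal (X y)) x))"

end

theory Submission
  imports Defs
begin

lemma cond_ess_sup_unique:
  assumes "is_cond_ess_sup M H X Z0"
  shows "AE x in M. cond_ess_sup M H X x = Z0 x"
proof -
  have S: "is_cond_ess_sup M H X (cond_ess_sup M H X)"
    unfolding cond_ess_sup_def by (rule someI[where P="is_cond_ess_sup M H X" and x=Z0, OF assms])
  have 1: "AE x in M. cond_ess_sup M H X x \<le> Z0 x"
    using S assms unfolding is_cond_ess_sup_def by blast
  have 2: "AE x in M. Z0 x \<le> cond_ess_sup M H X x"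
    using S assms unfolding is_cond_ess_sup_def by blast
  from 1 2 show ?thesis by eventually_elim auto
qed

lemma is_cond_ess_sup_self:
  assumes "Z \<in> borel_measurable H"
  shows "is_cond_ess_sup M H Z Z"
  using assms unfolding is_cond_ess_sup_def by auto

locale CI = prob_space M for M :: "'a measure" +
  fixes H :: "'a measure" and I :: "('a \<Rightarrow> real) \<Rightarrow> 'a \<Rightarrow> ereal"
  assumes subalg: "subalgebra M H"
  and ci: "cond_indicator_L1 M H I"
  and sd: "\<And>X. integrable M X \<Longrightarrow> AE x in M. I X x = - I (\<lambda>y. - X y) x"
  and additivity:
      "(\<forall>X Y. integrable M X \<longrightarrow> integrable M Y \<longrightarrow>
          (AE x in M. I (\<lambda>y. X y + Y y) x \<le> I X x + I Y x))
     \<or> (\<forall>X Y. integrable M X \<longrightarrow> integrable M Y \<longrightarrow>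
          (AE x in M. I (\<lambda>y. X y + Y y) x \<ge> I X x + I Y x))"
  and contr: "\<And>X. integrable M X \<Longrightarrow>
          (\<integral>\<^sup>+ x. e2ennreal \<bar>I X x\<bar> \<partial>M) \<le> (\<integral>\<^sup>+ x. ennreal \<bar>X x\<bar> \<partial>M)"
begin

definition J :: "('a \<Rightarrow> real) \<Rightarrow> 'a \<Rightarrow> real" where
  "J X = (\<lambda>x. real_of_ereal (I X x))"

lemma I_measH: "integrable M X \<Longrightarrow> I X \<in> borel_measurable H"
  using ci unfolding cond_indicator_L1_def by blast

lemma I_meas: "integrable M X \<Longrightarrow> I X \<in> borel_measurable M"
  using I_measH measurable_from_subalg[OF subalg] by blast

lemma J_measH: "integrable M X \<Longrightarrow> J X \<in> borel_measurable H"
  unfolding J_def using I_measH by measurable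

lemma J_meas: "integrable M X \<Longrightarrow> J X \<in> borel_measurable M"
  using J_measH measurable_from_subalg[OF subalg] by blast

lemma I_fin: assumes "integrable M X" shows "AE x in M. \<bar>I X x\<bar> \<noteq> \<infinity>"
proof -
  have m: "(\<lambda>x. e2ennreal \<bar>I X x\<bar>) \<in> borel_measurable M"
    using I_meas[OF assms] by measurable
  have "(\<integral>\<^sup>+ x. ennreal \<bar>X x\<bar> \<partial>M) < \<infinity>"
    using assms by (simp add: integrable_iff_bounded)
  hence "(\<integral>\<^sup>+ x. e2ennreal \<bar>I X x\<bar> \<partial>M) \<noteq> \<infinity>"
    using contr[OF assms] by (metis infinity_ennreal_def leD top.not_eq_extremum order.strict_trans1)
  from nn_integral_noteq_infinite[OF m this]
  show ?thesis
  proof eventually_elim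
    case (elim x) thus ?case by (cases "I X x") auto
  qed
qed

lemma I_J: assumes "integrable M X" shows "AE x in M. I X x = ereal (J X x)"
  using I_fin[OF assms] by eventually_elim (auto simp: J_def ereal_real)

lemma J_nn: assumes "integrable M X"
  shows "(\<integral>\<^sup>+ x. ennreal \<bar>J X x\<bar> \<partial>M) \<le> (\<integral>\<^sup>+ x. ennreal \<bar>X x\<bar> \<partial>M)"
proof -
  have "(\<integral>\<^sup>+ x. ennreal \<bar>J X x\<bar> \<partial>M) = (\<integral>\<^sup>+ x. e2ennreal \<bar>I X x\<bar> \<partial>M)"
    apply (rule nn_integral_cong_AE) using I_J[OF assms] by eventually_elim auto
  thus ?thesis using contr[OF assms] by simp
qed

lemma J_int: assumes "integrable M X" shows "integrable M (J X)"
proof -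
  have "(\<integral>\<^sup>+ x. ennreal \<bar>X x\<bar> \<partial>M) < \<infinity>"
    using assms by (simp add: integrable_iff_bounded)
  thus ?thesis using J_nn[OF assms] J_meas[OF assms]
    by (auto simp: integrable_iff_bounded)
qed

lemma J_contr: assumes "integrable M X" shows "(\<integral>x. \<bar>J X x\<bar> \<partial>M) \<le> (\<integral>x. \<bar>X x\<bar> \<partial>M)"
proof -
  have "ennreal (\<integral>x. \<bar>J X x\<bar> \<partial>M) \<le> ennreal (\<integral>x. \<bar>X x\<bar> \<partial>M)"
    using J_nn[OF assms] 
    by (subst (1 2) nn_integral_eq_integral[symmetric]) (auto intro: J_int assms)
  moreover have "0 \<le> (\<integral>x. \<bar>X x\<bar> \<partial>M)" by (rule integral_nonneg_AE) auto
  ultimately show ?thesis by (simp add: ennreal_le_iff)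
qed

lemma J_add: assumes X: "integrable M X" and Y: "integrable M Y"
  shows "AE x in M. J (\<lambda>y. X y + Y y) x = J X x + J Y x"
proof -
  have XY: "integrable M (\<lambda>y. X y + Y y)" using X Y by auto
  have nY: "integrable M (\<lambda>y. - Y y)" using Y by auto
  have nX: "integrable M (\<lambda>y. - X y)" using X by auto
  have nXY: "integrable M (\<lambda>y. - X y + - Y y)" using X Y by auto
  note f = I_J[OF X] I_J[OF Y] I_J[OF XY] I_J[OF nY] I_J[OF nX] I_J[OF nXY]
  have sdY: "AE x in M. I Y x = - I (\<lambda>y. - Y y) x" using sd[OF Y] .
  have sdX: "AE x in M. I X x = - I (\<lambda>y. - X y) x" using sd[OF X] .
  have sdXY: "AE x in M. I (\<lambda>y. X y + Y y) x = - I (\<lambda>y. - X y + - Y y) x"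
    using sd[OF XY] by simp
  from additivity show ?thesis
  proof
    assume A: "\<forall>X Y. integrable M X \<longrightarrow> integrable M Y \<longrightarrow>
          (AE x in M. I (\<lambda>y. X y + Y y) x \<le> I X x + I Y x)"
    have 1: "AE x in M. I (\<lambda>y. X y + Y y) x \<le> I X x + I Y x" using A X Y by blast
    have 2: "AE x in M. I X x \<le> I (\<lambda>y. X y + Y y) x + I (\<lambda>y. - Y y) x"
      using A[rule_format, OF XY nY] by simp
    from 1 2 f sdY show ?thesis by eventually_elim simp
  next
    assume A: "\<forall>X Y. integrable M X \<longrightarrow> integrable M Y \<longrightarrow>
          (AE x in M. I (\<lambda>y. X y + Y y) x \<ge> I X x + I Y x)"
    have 1: "AE x in M. I (\<lambda>y. X y + Y y) x \<ge> I X x + I Y x" using A X Y by blast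
    have 2: "AE x in M. I X x \<ge> I (\<lambda>y. X y + Y y) x + I (\<lambda>y. - Y y) x"
      using A[rule_format, OF XY nY] by simp
    from 1 2 f sdY show ?thesis by eventually_elim simp
  qed
qed


lemma J_H: assumes Z: "integrable M Z" and ZH: "Z \<in> borel_measurable H"
  shows "AE x in M. J Z x = Z x"
proof -
  have b: "AE x in M. cond_ess_inf M H (\<lambda>y. ereal (Z y)) x \<le> I Z x \<and>
                    I Z x \<le> cond_ess_sup M H (\<lambda>y. ereal (Z y)) x"
    using ci Z unfolding cond_indicator_L1_def by blast
  have m1: "(\<lambda>y. ereal (Z y)) \<in> borel_measurable H" using ZH by measurable
  have m2: "(\<lambda>y. - ereal (Z y)) \<in> borel_measurable H" using ZH by measurable
  have u1: "AE x in M. cond_ess_sup M H (\<lambda>y. ereal (Z y)) x = ereal (Z x)"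
    by (rule cond_ess_sup_unique[OF is_cond_ess_sup_self[OF m1]])
  have u2: "AE x in M. cond_ess_sup M H (\<lambda>y. - ereal (Z y)) x = - ereal (Z x)"
    by (rule cond_ess_sup_unique[OF is_cond_ess_sup_self[OF m2]])
  from b u1 u2 I_J[OF Z] show ?thesis
    by eventually_elim (auto simp: cond_ess_inf_def)
qed

lemma J_const: "AE x in M. J (\<lambda>y. c) x = c"
  by (rule J_H) auto

lemma J_ext: assumes "integrable M X" "integrable M Y" "AE x in M. Z x = X x + Y x"
  and "integrable M Z"
  shows "True" by simp

lemma int_J_le: assumes X: "integrable M X" and nn: "\<And>x. 0 \<le> X x"
  shows "(\<integral>x. J X x \<partial>M) \<le> (\<integral>x. X x \<partial>M)"
proof -
  have "(\<integral>x. J X x \<partial>M) \<le> (\<integral>x. \<bar>J X x\<bar> \<partial>M)"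
    by (rule integral_mono) (auto intro: J_int X)
  also have "\<dots> \<le> (\<integral>x. \<bar>X x\<bar> \<partial>M)" by (rule J_contr[OF X])
  also have "\<dots> = (\<integral>x. X x \<partial>M)" using nn by simp
  finally show ?thesis .
qed

lemma int_J_01: assumes X: "integrable M X" and nn: "\<And>x. 0 \<le> X x" and le: "\<And>x. X x \<le> c"
  shows "(\<integral>x. J X x \<partial>M) = (\<integral>x. X x \<partial>M)"
proof -
  let ?Y = "\<lambda>x. c - X x"
  have Y: "integrable M ?Y" using X by auto
  have "AE x in M. J (\<lambda>y. ?Y y + X y) x = J ?Y x + J X x" by (rule J_add[OF Y X])
  hence "AE x in M. J ?Y x = c - J X x" using J_const[of c] by eventually_elim simp
  hence "(\<integral>x. J ?Y x \<partial>M) = (\<integral>x. c - J X x \<partial>M)" using J_meas[OF X] J_meas[OF Y] by (intro integral_cong_AE) auto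
  also have "\<dots> = c - (\<integral>x. J X x \<partial>M)" using J_int[OF X] by (simp add: prob_space)
  finally have 1: "(\<integral>x. J ?Y x \<partial>M) = c - (\<integral>x. J X x \<partial>M)" .
  have 2: "(\<integral>x. J ?Y x \<partial>M) \<le> (\<integral>x. ?Y x \<partial>M)" by (rule int_J_le[OF Y]) (use le in auto)
  have 3: "(\<integral>x. ?Y x \<partial>M) = c - (\<integral>x. X x \<partial>M)" using X by (simp add: prob_space)
  show ?thesis using 1 2 3 int_J_le[OF X nn] by linarith
qed

lemma int_J_bdd: assumes X: "integrable M X" and le: "\<And>x. \<bar>X x\<bar> \<le> c"
  shows "(\<integral>x. J X x \<partial>M) = (\<integral>x. X x \<partial>M)"
proof -
  let ?Y = "\<lambda>x. X x + c"
  have Y: "integrable M ?Y" using X by auto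
  have "AE x in M. J ?Y x = J X x + J (\<lambda>y. c) x" by (rule J_add[OF X]) auto
  hence "AE x in M. J ?Y x = J X x + c" using J_const[of c] by eventually_elim simp
  hence "(\<integral>x. J ?Y x \<partial>M) = (\<integral>x. J X x + c \<partial>M)" using J_meas[OF X] J_meas[OF Y] by (intro integral_cong_AE) auto
  also have "\<dots> = (\<integral>x. J X x \<partial>M) + c" using J_int[OF X] by (simp add: prob_space)
  finally have 1: "(\<integral>x. J ?Y x \<partial>M) = (\<integral>x. J X x \<partial>M) + c" .
  have 2: "(\<integral>x. J ?Y x \<partial>M) = (\<integral>x. ?Y x \<partial>M)"
    by (rule int_J_01[OF Y, of "2*c"]) (smt (verit) le)+
  have 3: "(\<integral>x. ?Y x \<partial>M) = (\<integral>x. X x \<partial>M) + c" using X by (simp add: prob_space)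
  show ?thesis using 1 2 3 by linarith
qed

lemma J_pos: assumes X: "integrable M X" and nn: "\<And>x. 0 \<le> X x" and le: "\<And>x. X x \<le> c"
  shows "AE x in M. 0 \<le> J X x"
proof -
  have a: "(\<integral>x. \<bar>J X x\<bar> \<partial>M) \<le> (\<integral>x. J X x \<partial>M)"
    using J_contr[OF X] int_J_01[OF X nn le] nn by simp
  have i: "integrable M (\<lambda>x. \<bar>J X x\<bar> - J X x)" using J_int[OF X] by auto
  have "(\<integral>x. \<bar>J X x\<bar> - J X x \<partial>M) = (\<integral>x. \<bar>J X x\<bar> \<partial>M) - (\<integral>x. J X x \<partial>M)"
    using J_int[OF X] by (subst Bochner_Integration.integral_diff) auto
  moreover have "0 \<le> (\<integral>x. \<bar>J X x\<bar> - J X x \<partial>M)" by (rule integral_nonneg_AE) auto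
  ultimately have "(\<integral>x. \<bar>J X x\<bar> - J X x \<partial>M) = 0" using a by linarith
  hence "AE x in M. \<bar>J X x\<bar> - J X x = 0" using integral_nonneg_eq_0_iff_AE[OF i] by auto
  thus ?thesis by eventually_elim auto
qed


lemma J_loc0: assumes X: "integrable M X" and le: "\<And>x. \<bar>X x\<bar> \<le> c"
  and hH: "h \<in> borel_measurable H" and h01: "\<And>x. h x = 0 \<or> h x = 1"
  shows "AE x in M. h x = 0 \<longrightarrow> J (\<lambda>y. h y * X y) x = 0"
proof -
  have hM: "h \<in> borel_measurable M" using hH measurable_from_subalg[OF subalg] by blast
  have Xm: "X \<in> borel_measurable M" using X by auto
  have c0: "0 \<le> c" using le[of undefined] by linarith
  have hb: "\<And>x. \<bar>h x\<bar> \<le> 1" using h01 by (metis abs_0 abs_one order_refl zero_le_one)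
  have hXb: "\<And>x. \<bar>h x * X x\<bar> \<le> c"
    using h01 le by (metis abs_0 mult_1 mult_zero_left c0)
  have hX: "integrable M (\<lambda>y. h y * X y)"
    by (rule integrable_const_bound[where B=c]) (use hXb hM Xm in auto)
  have chH: "(\<lambda>y. c * h y) \<in> borel_measurable H" using hH by measurable
  have ch: "integrable M (\<lambda>y. c * h y)"
    by (rule integrable_const_bound[where B=c]) (use hb hM c0 in \<open>auto simp: abs_mult intro: mult_left_le\<close>)
  let ?Y1 = "\<lambda>y. c * h y - h y * X y"
  let ?Y2 = "\<lambda>y. h y * X y + c * h y"
  have Y1: "integrable M ?Y1" using ch hX by auto
  have Y2: "integrable M ?Y2" using ch hX by auto
  have q1: "0 \<le> ?Y1 x \<and> ?Y1 x \<le> 2*c" for x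
    using h01[of x] le[of x] by (elim disjE) (simp_all add: abs_le_iff)
  have q2: "0 \<le> ?Y2 x \<and> ?Y2 x \<le> 2*c" for x
    using h01[of x] le[of x] by (elim disjE) (simp_all add: abs_le_iff)
  have p1: "AE x in M. 0 \<le> J ?Y1 x"
    by (rule J_pos[OF Y1, of "2*c"]) (use q1 in auto)
  have p2: "AE x in M. 0 \<le> J ?Y2 x"
    by (rule J_pos[OF Y2, of "2*c"]) (use q2 in auto)
  have a1: "AE x in M. J (\<lambda>y. ?Y1 y + h y * X y) x = J ?Y1 x + J (\<lambda>y. h y * X y) x"
    by (rule J_add[OF Y1 hX])
  have a2: "AE x in M. J ?Y2 x = J (\<lambda>y. h y * X y) x + J (\<lambda>y. c * h y) x"
    by (rule J_add[OF hX ch])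
  have e: "AE x in M. J (\<lambda>y. c * h y) x = c * h x" by (rule J_H[OF ch chH])
  from p1 p2 a1 a2 e show ?thesis by eventually_elim auto
qed

lemma J_loc: assumes X: "integrable M X" and le: "\<And>x. \<bar>X x\<bar> \<le> c" and A: "A \<in> sets H"
  shows "(\<integral>x. indicator A x * J X x \<partial>M) = (\<integral>x. indicator A x * X x \<partial>M)"
proof -
  have AM: "A \<in> sets M" using A subalg by (auto simp: subalgebra_def)
  have Xm: "X \<in> borel_measurable M" using X by auto
  have h1: "indicator A \<in> borel_measurable H" using A by measurable
  have h2: "(\<lambda>x. 1 - indicator A x :: real) \<in> borel_measurable H" using A by measurable
  let ?XA = "\<lambda>y. indicator A y * X y"
  let ?XB = "\<lambda>y. (1 - indicator A y) * X y"
  have bA: "\<bar>?XA x\<bar> \<le> c" for x using le[of x] by (auto simp: indicator_def)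
  have bB: "\<bar>?XB x\<bar> \<le> c" for x using le[of x] by (auto simp: indicator_def)
  have XA: "integrable M ?XA"
    by (rule integrable_const_bound[where B=c]) (use bA AM Xm in auto)
  have XB: "integrable M ?XB"
    by (rule integrable_const_bound[where B=c]) (use bB AM Xm in auto)
  have eq: "(\<lambda>y. ?XA y + ?XB y) = X" by (rule ext) (simp add: algebra_simps)
  have a: "AE x in M. J X x = J ?XA x + J ?XB x" using J_add[OF XA XB] unfolding eq .
  have l1: "AE x in M. indicator A x = (0::real) \<longrightarrow> J ?XA x = 0"
    by (rule J_loc0[OF X le h1]) (auto simp: indicator_def)
  have l2: "AE x in M. 1 - indicator A x = (0::real) \<longrightarrow> J ?XB x = 0"
    by (rule J_loc0[OF X le h2]) (auto simp: indicator_def)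
  have "AE x in M. indicator A x * J X x = J ?XA x"
    using a l1 l2 by eventually_elim (auto simp: indicator_def split: if_splits)
  hence "(\<integral>x. indicator A x * J X x \<partial>M) = (\<integral>x. J ?XA x \<partial>M)"
    using J_meas[OF X] J_meas[OF XA] AM by (intro integral_cong_AE) auto
  also have "\<dots> = (\<integral>x. ?XA x \<partial>M)" by (rule int_J_bdd[OF XA bA])
  finally show ?thesis .
qed

lemma trunc_lim: assumes X: "integrable M X"
  shows "(\<lambda>n. \<integral>x. \<bar>X x - max (- real n) (min (X x) (real n))\<bar> \<partial>M) \<longlonglongrightarrow> 0"
proof -
  have Xm: "X \<in> borel_measurable M" using X by auto
  have "(\<lambda>n. \<integral>x. \<bar>X x - max (- real n) (min (X x) (real n))\<bar> \<partial>M) \<longlonglongrightarrow> (\<integral>x. 0 \<partial>M)"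
  proof (rule integral_dominated_convergence[where w="\<lambda>x. \<bar>X x\<bar>"])
    show "AE x in M. (\<lambda>n. \<bar>X x - max (- real n) (min (X x) (real n))\<bar>) \<longlonglongrightarrow> 0"
    proof (rule AE_I2)
      fix x
      obtain N where N: "\<bar>X x\<bar> \<le> real N" using real_arch_simple by blast
      show "(\<lambda>n. \<bar>X x - max (- real n) (min (X x) (real n))\<bar>) \<longlonglongrightarrow> 0"
      proof (rule tendsto_eventually)
        show "\<forall>\<^sub>F n in sequentially. \<bar>X x - max (- real n) (min (X x) (real n))\<bar> = 0"
          unfolding eventually_sequentially
        proof (intro exI allI impI)
          fix n assume "N \<le> n"
          hence "real N \<le> real n" by simp
          thus "\<bar>X x - max (- real n) (min (X x) (real n))\<bar> = 0" using N by auto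
        qed
      qed
    qed
    show "\<And>i. AE x in M. norm \<bar>X x - max (- real i) (min (X x) (real i))\<bar> \<le> \<bar>X x\<bar>"
      by (rule AE_I2) auto
  qed (use X Xm in auto)
  thus ?thesis by simp
qed


lemma key: assumes X: "integrable M X" and A: "A \<in> sets H"
  shows "(\<integral>x. indicator A x * J X x \<partial>M) = (\<integral>x. indicator A x * X x \<partial>M)"
proof -
  have AM: "A \<in> sets M" using A subalg by (auto simp: subalgebra_def)
  have Xm: "X \<in> borel_measurable M" using X by auto
  define a where "a = (\<integral>x. indicator A x * J X x \<partial>M)"
  define b where "b = (\<integral>x. indicator A x * X x \<partial>M)"
  define s where "s n = (\<integral>x. \<bar>X x - max (- real n) (min (X x) (real n))\<bar> \<partial>M)" for n :: nat
  have bound: "\<bar>a - b\<bar> \<le> 2 * s n" for n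
  proof -
    define T where "T = (\<lambda>x. max (- real n) (min (X x) (real n)))"
    define D where "D = (\<lambda>x. X x - T x)"
    have Tb: "\<bar>T x\<bar> \<le> real n" for x unfolding T_def by auto
    have T: "integrable M T"
      by (rule integrable_const_bound[where B="real n"]) (use Tb Xm in \<open>auto simp: T_def\<close>)
    have D: "integrable M D" unfolding D_def using X T by auto
    have eq: "(\<lambda>y. T y + D y) = X" unfolding D_def by auto
    have ad: "AE x in M. J X x = J T x + J D x" using J_add[OF T D] unfolding eq .
    have iA: "integrable M (\<lambda>x. indicator A x * J Y x)" if "integrable M Y" for Y :: "'a \<Rightarrow> real"
      using integrable_real_mult_indicator[OF AM J_int[OF that]] by (simp add: mult.commute)
    have iA2: "integrable M (\<lambda>x. indicator A x * Y x)" if "integrable M Y" for Y :: "'a \<Rightarrow> real"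
      using integrable_real_mult_indicator[OF AM that] by (simp add: mult.commute)
    have ae: "AE x in M. indicator A x * J X x = indicator A x * J T x + indicator A x * J D x"
      using ad by eventually_elim (simp add: distrib_left)
    have m1: "(\<lambda>x. indicator A x * J X x) \<in> borel_measurable M"
      using iA[OF X] by (rule borel_measurable_integrable)
    have m2: "(\<lambda>x. indicator A x * J T x + indicator A x * J D x) \<in> borel_measurable M"
      using iA[OF T] iA[OF D] by (intro borel_measurable_integrable) auto
    have "a = (\<integral>x. indicator A x * J T x + indicator A x * J D x \<partial>M)"
      unfolding a_def by (rule integral_cong_AE[OF m1 m2 ae])
    also have "\<dots> = (\<integral>x. indicator A x * J T x \<partial>M) + (\<integral>x. indicator A x * J D x \<partial>M)"
      using iA[OF T] iA[OF D] by simp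
    also have "(\<integral>x. indicator A x * J T x \<partial>M) = (\<integral>x. indicator A x * T x \<partial>M)"
      by (rule J_loc[OF T Tb A])
    finally have a1: "a = (\<integral>x. indicator A x * T x \<partial>M) + (\<integral>x. indicator A x * J D x \<partial>M)" .
    have "b = (\<integral>x. indicator A x * T x + indicator A x * D x \<partial>M)"
      unfolding b_def D_def by (rule Bochner_Integration.integral_cong) (simp_all add: right_diff_distrib)
    also have "\<dots> = (\<integral>x. indicator A x * T x \<partial>M) + (\<integral>x. indicator A x * D x \<partial>M)"
      using iA2[OF T] iA2[OF D] by simp
    finally have b1: "b = (\<integral>x. indicator A x * T x \<partial>M) + (\<integral>x. indicator A x * D x \<partial>M)" .
    have c1: "\<bar>\<integral>x. indicator A x * J D x \<partial>M\<bar> \<le> (\<integral>x. \<bar>D x\<bar> \<partial>M)"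
    proof -
      have "\<bar>\<integral>x. indicator A x * J D x \<partial>M\<bar> \<le> (\<integral>x. \<bar>indicator A x * J D x\<bar> \<partial>M)" by simp
      also have "\<dots> \<le> (\<integral>x. \<bar>J D x\<bar> \<partial>M)"
        by (rule integral_mono) (use iA[OF D] J_int[OF D] in \<open>auto simp: indicator_def\<close>)
      also have "\<dots> \<le> (\<integral>x. \<bar>D x\<bar> \<partial>M)" by (rule J_contr[OF D])
      finally show ?thesis .
    qed
    have c2: "\<bar>\<integral>x. indicator A x * D x \<partial>M\<bar> \<le> (\<integral>x. \<bar>D x\<bar> \<partial>M)"
    proof -
      have "\<bar>\<integral>x. indicator A x * D x \<partial>M\<bar> \<le> (\<integral>x. \<bar>indicator A x * D x\<bar> \<partial>M)" by simp
      also have "\<dots> \<le> (\<integral>x. \<bar>D x\<bar> \<partial>M)"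
        by (rule integral_mono) (use iA2[OF D] D in \<open>auto simp: indicator_def\<close>)
      finally show ?thesis .
    qed
    have "s n = (\<integral>x. \<bar>D x\<bar> \<partial>M)" unfolding s_def D_def T_def ..
    thus ?thesis using a1 b1 c1 c2 by linarith
  qed
  have "(\<lambda>n. 2 * s n) \<longlonglongrightarrow> 2 * 0"
    by (rule tendsto_mult[OF tendsto_const]) (unfold s_def, rule trunc_lim[OF X])
  hence "\<bar>a - b\<bar> \<le> 2 * 0" by (rule LIMSEQ_le_const) (use bound in auto)
  thus ?thesis unfolding a_def b_def by simp
qed

theorem main: assumes X: "integrable M X"
  shows "AE x in M. I X x = ereal (real_cond_exp M H X x)"
proof -
  have sfs: "sigma_finite_subalgebra M H"
    by (rule finite_measure_subalgebra_is_sigma_finite)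
       (simp add: finite_measure_subalgebra_def finite_measure_subalgebra_axioms_def
          subalg finite_measure_axioms)
  have "AE x in M. real_cond_exp M H X x = J X x"
  proof (rule sigma_finite_subalgebra.real_cond_exp_charact[OF sfs])
    fix A assume A: "A \<in> sets H"
    show "(\<integral>x\<in>A. X x \<partial>M) = (\<integral>x\<in>A. J X x \<partial>M)"
      unfolding set_lebesgue_integral_def using key[OF X A] by simp
  qed (use X J_int[OF X] J_measH[OF X] in auto)
  with I_J[OF X] show ?thesis by eventually_elim simp
qed

end

theorem mainTheorem11:
  fixes M H :: "'a measure" and I :: "('a \<Rightarrow> real) \<Rightarrow> 'a \<Rightarrow> ereal"
  assumes "prob_space M"
    and "complete_meas M"
    and "complete_subalg M H"
    and "cond_indicator_L1 M H I"
    and self_dual: "\<forall>X. integrable M X \<longrightarrow> (AE x in M. I X x = - I (\<lambda>y. - X y) x)"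
    and additivity:
      "(\<forall>X Y. integrable M X \<longrightarrow> integrable M Y \<longrightarrow>
          (AE x in M. I (\<lambda>y. X y + Y y) x \<le> I X x + I Y x))
     \<or> (\<forall>X Y. integrable M X \<longrightarrow> integrable M Y \<longrightarrow>
          (AE x in M. I (\<lambda>y. X y + Y y) x \<ge> I X x + I Y x))"
    and contraction: "\<forall>X. integrable M X \<longrightarrow>
          (\<integral>\<^sup>+ x. e2ennreal \<bar>I X x\<bar> \<partial>M) \<le> (\<integral>\<^sup>+ x. ennreal \<bar>X x\<bar> \<partial>M)"
  shows "\<forall>X. integrable M X \<longrightarrow> (AE x in M. I X x = ereal (real_cond_exp M H X x))"
proof -
  interpret CI M H I
  proof (rule CI.intro[OF assms(1)], rule CI_axioms.intro)
    show "subalgebra M H" using assms(3) unfolding complete_subalg_def by blast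
    show "cond_indicator_L1 M H I" by (rule assms(4))
    show "\<And>X. integrable M X \<Longrightarrow> AE x in M. I X x = - I (\<lambda>y. - X y) x"
      using self_dual by blast
    show "(\<forall>X Y. integrable M X \<longrightarrow> integrable M Y \<longrightarrow>
          (AE x in M. I (\<lambda>y. X y + Y y) x \<le> I X x + I Y x))
     \<or> (\<forall>X Y. integrable M X \<longrightarrow> integrable M Y \<longrightarrow>
          (AE x in M. I (\<lambda>y. X y + Y y) x \<ge> I X x + I Y x))" by (rule additivity)
    show "\<And>X. integrable M X \<Longrightarrow>
          (\<integral>\<^sup>+ x. e2ennreal \<bar>I X x\<bar> \<partial>M) \<le> (\<integral>\<^sup>+ x. ennreal \<bar>X x\<bar> \<partial>M)"
      using contraction by blast
  qed
  show ?thesis using main by blast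
qed

end
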